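(* Under the standing setup below, let $\boldsymbol\beta,\boldsymbol\nu\in(0,\infty)^N$. Then any globally optimal solution $(\mathbf p^\#,\mathbf B^\#)$ of Problem $\mathbb P_3(\boldsymbol\beta,\boldsymbol\nu)$ can be given by $$B_n^\#=\mathcal B_n(\lambda^\#),\qquad p_n^\#=\frac{\sigma_n^2 B_n^\#\,\psi_n(\lambda^\#)}{g_n}\qquad(n\in\mathcal N),$$ where $\lambda^\#>0$ is a solution of $\sum_{n\in\mathcal N}\mathcal B_n(\lambda)=B_{total}$, and for $\lambda\ge 0$: $$\psi_n(\lambda)=\exp\Big\{1+W\Big(\tfrac1e\big(\tfrac{g_n\lambda}{\nu_n\beta_n\sigma_n^2}-1\big)\Big)\Big\}-1,\qquad \mathcal B_n(\lambda)=\frac{\max\{\gamma_n(\lambda),\,r_n^{\min}\}}{\log_2(1+\psi_n(\lambda))},$$ $$\gamma_n(\lambda)=\begin{cases} r_{n,e}+\xi, & \text{if there is } \xi\ge0 \text{ with } f_n'(\xi)=\dfrac{\beta_n\sigma_n^2(1+\psi_n(\lambda))\ln 2}{c_n g_n},\\ r_{n,e}, & \text{otherwise.}\end{cases}$$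
   Context: Standing setup: $N\ge1$ users, $\mathcal N=\{1,\dots,N\}$, total bandwidth $B_{total}>0$. For each $n$: constants $g_n>0$, $\sigma_n^2>0$, $p_n^{cir}>0$, weight $c_n>0$, $r_{n,e}\ge 0$, $r_n^{\min}>0$ with $r_n^{\min}\ge r_{n,e}$. Rate $r_n(p,B)=B\log_2\!\big(1+\frac{g_n p}{\sigma_n^2 B}\big)$ ($p\ge0$, $B>0$), secrecy rate $r_{n,s}(p,B)=r_n(p,B)-r_{n,e}$. Utility $f_n:(0,\infty)\to\mathbb R$ is twice differentiable with $f_n'>0$, $f_n''\le 0$ on $(0,\infty)$; $f_n(0)$, $f_n'(0)$ are defined as the corresponding limits at $0^+$ when finite. $F_n(p,B)=c_n f_n(r_{n,s}(p,B))$. Problem $\mathbb P_3(\boldsymbol\beta,\boldsymbol\nu)$: maximize $\sum_n \nu_n\big(F_n(p_n,B_n)-\beta_n(p_n+p_n^{cir})\big)$ over $(\mathbf p,\mathbf B)$ with $p_n\ge0,B_n>0$ subject to $\sum_n B_n\le B_{total}$ and $r_n(p_n,B_n)\ge r_n^{\min}$ for all $n$. $W$ denotes the principal branch of the Lambert $W$ function: for $z\ge -e^{-1}$, $W(z)$ is the solution $x\ge-1$ of $xe^x=z$. *)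

theory Defs
  imports "HOL-Analysis.Analysis"
begin

text \<open>Principal branch of Lambert W: for z \<ge> -1/e, the solution x \<ge> -1 of x e^x = z.\<close>
definition LambertW :: "real \<Rightarrow> real" where
  "LambertW z = (THE x. x \<ge> -1 \<and> x * exp x = z)"

definition rate :: "real \<Rightarrow> real \<Rightarrow> real \<Rightarrow> real \<Rightarrow> real" where
  "rate g s2 p B = B * log 2 (1 + g * p / (s2 * B))"

definition uval :: "(real \<Rightarrow> real) \<Rightarrow> real \<Rightarrow> real" where
  "uval f x = (if x > 0 then f x else Lim (at_right 0) f)"

definition P3_feasible ::
  "nat \<Rightarrow> real \<Rightarrow> (nat \<Rightarrow> real) \<Rightarrow> (nat \<Rightarrow> real) \<Rightarrow> (nat \<Rightarrow> real)
   \<Rightarrow> (nat \<Rightarrow> real) \<Rightarrow> (nat \<Rightarrow> real) \<Rightarrow> bool" where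
  "P3_feasible N Btot g s2 rmin p B \<longleftrightarrow>
     (\<forall>n\<in>{1..N}. p n \<ge> 0 \<and> B n > 0 \<and> rate (g n) (s2 n) (p n) (B n) \<ge> rmin n) \<and>
     (\<Sum>n\<in>{1..N}. B n) \<le> Btot"

text \<open>Feasible points at which the objective is a finite real number
  (the utility at secrecy rate 0 is the limit at 0+, required to be finite).\<close>
definition P3_admissible ::
  "nat \<Rightarrow> real \<Rightarrow> (nat \<Rightarrow> real) \<Rightarrow> (nat \<Rightarrow> real) \<Rightarrow> (nat \<Rightarrow> real) \<Rightarrow> (nat \<Rightarrow> real)
   \<Rightarrow> (nat \<Rightarrow> real \<Rightarrow> real) \<Rightarrow> (nat \<Rightarrow> real) \<Rightarrow> (nat \<Rightarrow> real) \<Rightarrow> bool" where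
  "P3_admissible N Btot g s2 re rmin f p B \<longleftrightarrow>
     P3_feasible N Btot g s2 rmin p B \<and>
     (\<forall>n\<in>{1..N}. rate (g n) (s2 n) (p n) (B n) - re n > 0 \<or>
                  (\<exists>L. (f n \<longlongrightarrow> L) (at_right 0)))"

definition P3_obj ::
  "nat \<Rightarrow> (nat \<Rightarrow> real) \<Rightarrow> (nat \<Rightarrow> real) \<Rightarrow> (nat \<Rightarrow> real) \<Rightarrow> (nat \<Rightarrow> real) \<Rightarrow> (nat \<Rightarrow> real)
   \<Rightarrow> (nat \<Rightarrow> real \<Rightarrow> real) \<Rightarrow> (nat \<Rightarrow> real) \<Rightarrow> (nat \<Rightarrow> real)
   \<Rightarrow> (nat \<Rightarrow> real) \<Rightarrow> (nat \<Rightarrow> real) \<Rightarrow> real" where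
  "P3_obj N g s2 pcir c re f \<beta> \<nu> p B =
     (\<Sum>n\<in>{1..N}. \<nu> n * (c n * uval (f n) (rate (g n) (s2 n) (p n) (B n) - re n)
                          - \<beta> n * (p n + pcir n)))"

definition P3_global_opt ::
  "nat \<Rightarrow> real \<Rightarrow> (nat \<Rightarrow> real) \<Rightarrow> (nat \<Rightarrow> real) \<Rightarrow> (nat \<Rightarrow> real) \<Rightarrow> (nat \<Rightarrow> real)
   \<Rightarrow> (nat \<Rightarrow> real) \<Rightarrow> (nat \<Rightarrow> real) \<Rightarrow> (nat \<Rightarrow> real \<Rightarrow> real) \<Rightarrow> (nat \<Rightarrow> real) \<Rightarrow> (nat \<Rightarrow> real)
   \<Rightarrow> (nat \<Rightarrow> real) \<Rightarrow> (nat \<Rightarrow> real) \<Rightarrow> bool" where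
  "P3_global_opt N Btot g s2 pcir c re rmin f \<beta> \<nu> p B \<longleftrightarrow>
     P3_admissible N Btot g s2 re rmin f p B \<and>
     (\<forall>p' B'. P3_admissible N Btot g s2 re rmin f p' B' \<longrightarrow>
        P3_obj N g s2 pcir c re f \<beta> \<nu> p' B' \<le> P3_obj N g s2 pcir c re f \<beta> \<nu> p B)"

definition psi :: "real \<Rightarrow> real \<Rightarrow> real \<Rightarrow> real \<Rightarrow> real \<Rightarrow> real" where
  "psi g s2 \<beta> \<nu> lam = exp (1 + LambertW ((1 / exp 1) * (g * lam / (\<nu> * \<beta> * s2) - 1))) - 1"

text \<open>f'(xi) = t for xi \<ge> 0, where f'(0) means the (finite) limit of f' at 0+.\<close>
definition deriv_eq :: "(real \<Rightarrow> real) \<Rightarrow> real \<Rightarrow> real \<Rightarrow> bool" where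
  "deriv_eq fd \<xi> t \<longleftrightarrow> (\<xi> > 0 \<and> fd \<xi> = t) \<or> (\<xi> = 0 \<and> (fd \<longlongrightarrow> t) (at_right 0))"

text \<open>gam is an admissible value of gamma_n(lambda), given psi = psi_n(lambda).\<close>
definition gamma_spec :: "(real \<Rightarrow> real) \<Rightarrow> real \<Rightarrow> real \<Rightarrow> real \<Rightarrow> real \<Rightarrow> real \<Rightarrow> real \<Rightarrow> real \<Rightarrow> bool" where
  "gamma_spec fd re \<beta> s2 c g ps gam \<longleftrightarrow>
     (let t = \<beta> * s2 * (1 + ps) * ln 2 / (c * g) in
      if (\<exists>\<xi>\<ge>0. deriv_eq fd \<xi> t) then (\<exists>\<xi>\<ge>0. deriv_eq fd \<xi> t \<and> gam = re + \<xi>)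
      else gam = re)"

definition Bcal :: "real \<Rightarrow> real \<Rightarrow> real \<Rightarrow> real" where
  "Bcal gam rmin ps = max gam rmin / log 2 (1 + ps)"

end

theory Submission
  imports Defs
begin


lemma xexp_strict_mono:
  fixes a b :: real assumes "-1 \<le> a" "a < b" shows "a * exp a < b * exp b"
proof (rule DERIV_pos_imp_increasing_open[OF assms(2)])
  fix x assume "a < x" "x < b"
  then have "x > -1" using assms by simp
  show "\<exists>y. DERIV (\<lambda>u. u * exp u) x :> y \<and> y > 0"
    apply (rule exI[of _ "exp x + x * exp x"])
  proof (intro conjI)
    show "DERIV (\<lambda>u. u * exp u) x :> exp x + x * exp x"
      by (auto intro!: derivative_eq_intros)
    have "exp x + x * exp x = (1 + x) * exp x" by (simp add: algebra_simps)
    also have "\<dots> > 0" using \<open>x > -1\<close> by simp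
    finally show "exp x + x * exp x > 0" .
  qed
next
  show "continuous_on {a..b} (\<lambda>u. u * exp u)" by (intro continuous_intros)
qed

lemma LambertW_eq: fixes u :: real assumes "-1 \<le> u" shows "LambertW (u * exp u) = u"
  unfolding LambertW_def
proof (rule the_equality)
  show "-1 \<le> u \<and> u * exp u = u * exp u" using assms by simp
  fix y assume "-1 \<le> y \<and> y * exp y = u * exp u"
  then show "y = u" using xexp_strict_mono[of y u] xexp_strict_mono[of u y] assms
    by (metis linorder_neqE_linordered_idom order_less_irrefl)
qed

lemma Kpos: fixes x :: real assumes "x > 0" shows "(1+x) * ln (1+x) - x > 0"
proof -
  have "(1+0) * ln (1+0) - (0::real) < (1+x) * ln (1+x) - x"
  proof (rule DERIV_pos_imp_increasing_open[OF assms, where f="\<lambda>x. (1+x) * ln (1+x) - x"])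
    fix y :: real assume y: "0 < y" "y < x"
    show "\<exists>d. DERIV (\<lambda>x. (1+x) * ln (1+x) - x) y :> d \<and> d > 0"
      apply (rule exI[of _ "ln (1+y)"]) using y
      by (auto intro!: derivative_eq_intros simp: field_simps)
  next
    show "continuous_on {0..x} (\<lambda>x. (1+x) * ln (1+x) - x)"
      by (intro continuous_intros) auto
  qed
  then show ?thesis by simp
qed

lemma psi_eq:
  assumes "x > 0" "g > 0" "s2 > 0" "\<beta> > 0" "\<nu> > 0"
    and "lam = \<nu> * \<beta> * s2 * ((1+x) * ln (1+x) - x) / g"
  shows "psi g s2 \<beta> \<nu> lam = x"
proof -
  have "g * lam / (\<nu> * \<beta> * s2) = (1+x) * ln (1+x) - x" using assms by (simp add: field_simps)
  moreover have "exp (ln (1+x) - 1) = (1+x) / exp 1" using assms by (simp add: exp_diff)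
  ultimately have e: "(1 / exp 1) * (g * lam / (\<nu> * \<beta> * s2) - 1) = (ln (1+x) - 1) * exp (ln (1+x) - 1)"
    using assms by (simp add: field_simps)
  have "-1 \<le> ln (1+x) - 1" using assms by simp
  then show ?thesis unfolding psi_def e using LambertW_eq assms by simp
qed



lemma rate_deriv:
  assumes "g > 0" "s2 > 0" "B > 0" "p \<ge> 0"
  shows "DERIV (\<lambda>q. rate g s2 q B) p :> g / (s2 * ln 2 * (1 + g*p/(s2*B)))"
proof -
  have pos: "1 + g*p/(s2*B) > 0" using assms by (simp add: add_pos_nonneg)
  have "DERIV (\<lambda>q. B * (ln (1 + g*q/(s2*B)) / ln 2)) p :> B * ((1 / (1 + g*p/(s2*B))) * (g/(s2*B)) / ln 2)"
    using pos assms by (auto intro!: derivative_eq_intros)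
  moreover have "B * ((1 / (1 + g*p/(s2*B))) * (g/(s2*B)) / ln 2) = g / (s2 * ln 2 * (1 + g*p/(s2*B)))"
  proof -
    have "B * ((1 / (1 + g*p/(s2*B))) * (g/(s2*B)) / ln 2) = (B / (s2 * B)) * g / (ln 2 * (1 + g*p/(s2*B)))"
      by (simp add: field_simps)
    also have "B / (s2 * B) = 1 / s2" using assms by simp
    finally show ?thesis by simp
  qed
  ultimately have "DERIV (\<lambda>q. B * (ln (1 + g*q/(s2*B)) / ln 2)) p :> g / (s2 * ln 2 * (1 + g*p/(s2*B)))"
    by metis
  then show ?thesis unfolding rate_def log_def .
qed

lemma rate_strict_mono:
  assumes "g > 0" "s2 > 0" "B > 0" "0 \<le> p" "p < q"
  shows "rate g s2 p B < rate g s2 q B"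
proof -
  have "1 + g*p/(s2*B) < 1 + g*q/(s2*B)" using assms by (simp add: divide_strict_right_mono)
  moreover have "0 < 1 + g*p/(s2*B)" using assms by (simp add: add_pos_nonneg)
  ultimately show ?thesis unfolding rate_def using assms by simp
qed

lemma rate_nonneg:
  assumes "g > 0" "s2 > 0" "B > 0" "0 \<le> p"
  shows "rate g s2 p B \<ge> 0"
proof -
  have "1 \<le> 1 + g*p/(s2*B)" using assms by simp
  then have "log 2 (1 + g*p/(s2*B)) \<ge> 0" by simp
  then show ?thesis unfolding rate_def using assms by simp
qed

lemma rate_zero: "rate g s2 0 B = 0" unfolding rate_def by simp

lemma rate_eq_x:
  assumes "B > 0" shows "rate g s2 p B = B * log 2 (1 + g*p/(s2*B))"
  unfolding rate_def by simp

definition Pw :: "real \<Rightarrow> real \<Rightarrow> real \<Rightarrow> real \<Rightarrow> real" where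
  "Pw g s2 r B = s2 / g * B * (2 powr (r/B) - 1)"

lemma rate_Pw:
  assumes "g > 0" "s2 > 0" "B > 0"
  shows "rate g s2 (Pw g s2 r B) B = r"
proof -
  have "1 + g * Pw g s2 r B / (s2 * B) = 2 powr (r/B)"
    unfolding Pw_def using assms by (simp add: field_simps)
  then show ?thesis unfolding rate_def using assms by simp
qed

lemma Pw_nonneg:
  assumes "g > 0" "s2 > 0" "B > 0" "r \<ge> 0"
  shows "Pw g s2 r B \<ge> 0"
proof -
  have "2 powr (r/B) \<ge> 1" using assms by (intro ge_one_powr_ge_zero) auto
  then show ?thesis unfolding Pw_def using assms by simp
qed

lemma Pw_deriv:
  assumes "B > 0" "g > 0" "s2 > 0"
  shows "DERIV (Pw g s2 r) B :> s2 / g * ((2 powr (r/B) - 1) - 2 powr (r/B) * ln 2 * r / B)"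
proof -
  have eq: "Pw g s2 r = (\<lambda>B. s2 / g * B * (exp (r / B * ln 2) - 1))"
    unfolding Pw_def[abs_def] by (simp add: powr_def mult.commute)
  have "DERIV (\<lambda>B. s2 / g * B * (exp (r / B * ln 2) - 1)) B :>
      s2 / g * (exp (r / B * ln 2) - 1) + s2/g * B * (exp (r / B * ln 2) * (- (r / B^2) * ln 2))"
    using assms by (auto intro!: derivative_eq_intros simp: power2_eq_square field_simps)
  moreover have "s2 / g * (exp (r / B * ln 2) - 1) + s2/g * B * (exp (r / B * ln 2) * (- (r / B^2) * ln 2))
      = s2 / g * ((2 powr (r/B) - 1) - 2 powr (r/B) * ln 2 * r / B)"
    using assms by (simp add: power2_eq_square field_simps powr_def)
  ultimately show ?thesis unfolding eq by simp
qed

lemma Pw_at_opt: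
  assumes "g > 0" "s2 > 0" "B > 0" "p \<ge> 0" "r = rate g s2 p B"
  defines "x \<equiv> g*p/(s2*B)"
  shows "Pw g s2 r B = p"
    and "DERIV (Pw g s2 r) B :> s2 / g * (x - (1+x) * ln (1+x))"
proof -
  have xp: "1 + x > 0" unfolding x_def using assms by (simp add: add_pos_nonneg)
  have r: "r / B = log 2 (1+x)" using assms unfolding rate_def x_def by simp
  have e: "2 powr (r/B) = 1 + x" using r xp by simp
  show "Pw g s2 r B = p" unfolding Pw_def e x_def using assms by (simp add: field_simps)
  have "ln 2 * r / B = ln 2 * (r / B)" by simp
  also have "\<dots> = ln (1+x)" using r xp by (simp add: log_def)
  finally have "ln 2 * r / B = ln (1+x)" .
  then have "2 powr (r/B) * ln 2 * r / B = (1+x) * ln (1+x)" using e by (metis times_divide_eq_right mult.assoc)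
  then show "DERIV (Pw g s2 r) B :> s2 / g * (x - (1+x) * ln (1+x))"
    using Pw_deriv[OF assms(3) assms(1) assms(2), of r] e by simp
qed



lemma fd_antitone:
  assumes fdd: "\<forall>x>0. \<exists>d. (fd has_real_derivative d) (at x) \<and> d \<le> 0"
    and "0 < a" "a \<le> b" shows "fd b \<le> fd a"
  using DERIV_nonpos_imp_nonincreasing[OF assms(3), of fd] fdd assms(2) by force

lemma gamma_specI1:
  assumes "\<xi> \<ge> 0" "deriv_eq fd \<xi> (\<beta> * s2 * (1 + ps) * ln 2 / (c * g))" "gam = re + \<xi>"
  shows "gamma_spec fd re \<beta> s2 c g ps gam"
  unfolding gamma_spec_def Let_def using assms by auto

lemma gamma_specI2:
  assumes "\<not> (\<exists>\<xi>\<ge>0. deriv_eq fd \<xi> (\<beta> * s2 * (1 + ps) * ln 2 / (c * g)))" "gam = re"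
  shows "gamma_spec fd re \<beta> s2 c g ps gam"
  unfolding gamma_spec_def Let_def using assms by auto

lemma user_gamma:
  fixes f fd :: "real \<Rightarrow> real"
  assumes pos: "g > 0" "s2 > 0" "c > 0" "\<beta> > 0" "re \<ge> 0" "rmin > 0" "rmin \<ge> re" "B > 0" "p \<ge> 0"
    and rfeas: "rate g s2 p B \<ge> rmin"
    and fder: "\<forall>x>0. (f has_real_derivative fd x) (at x) \<and> fd x > 0"
    and fdd: "\<forall>x>0. \<exists>d. (fd has_real_derivative d) (at x) \<and> d \<le> 0"
    and adm: "rate g s2 p B - re > 0 \<or> (\<exists>L. (f \<longlongrightarrow> L) (at_right 0))"
    and opt: "\<And>p'. p' \<ge> 0 \<Longrightarrow> rate g s2 p' B \<ge> rmin \<Longrightarrow>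
                 (rate g s2 p' B - re > 0 \<or> (\<exists>L. (f \<longlongrightarrow> L) (at_right 0))) \<Longrightarrow>
                 c * uval f (rate g s2 p' B - re) - \<beta>*p' \<le> c * uval f (rate g s2 p B - re) - \<beta>*p"
  shows "\<exists>gam. gamma_spec fd re \<beta> s2 c g (g*p/(s2*B)) gam \<and> max gam rmin = rate g s2 p B"
proof -
  define r where "r = rate g s2 p B"
  define s where "s = r - re"
  define x where "x = g*p/(s2*B)"
  define R' where "R' = g / (s2 * ln 2 * (1 + g*p/(s2*B)))"
  define t where "t = \<beta> * s2 * (1 + x) * ln 2 / (c * g)"
  have x0: "x \<ge> 0" unfolding x_def using pos by simp
  have R'pos: "R' > 0" unfolding R'_def using pos by (simp add: add_pos_nonneg)
  have R'x: "R' = g / (s2 * ln 2 * (1 + x))" unfolding R'_def x_def by simp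
  have tR: "t * (c * R') = \<beta>"
  proof -
    define A where "A = s2 * (1 + x) * ln 2"
    have A: "A > 0" unfolding A_def using pos x0 by (simp add: add_pos_nonneg)
    have "t = \<beta> * A / (c * g)" unfolding t_def A_def by (simp add: mult.assoc)
    moreover have "R' = g / A" unfolding R'x A_def by (simp add: ac_simps)
    ultimately show ?thesis using A pos by simp
  qed
  have s0: "s \<ge> 0" unfolding s_def r_def using rfeas pos by simp
  have rderiv: "DERIV (\<lambda>q. rate g s2 q B) p :> R'" unfolding R'_def using rate_deriv pos by simp
  have rcont: "isCont (\<lambda>q. rate g s2 q B) p" using DERIV_isCont[OF rderiv] .
  have ppos: "p > 0"
  proof (rule ccontr)
    assume "\<not> p > 0" then have "p = 0" using pos by simp
    then show False using rfeas pos rate_zero[of g s2 B] by simp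
  qed
  have tiff: "fd y > t \<longleftrightarrow> c * (fd y * R') - \<beta> > 0" for y
  proof -
    have "fd y > t \<longleftrightarrow> fd y * (c * R') > t * (c * R')" using pos R'pos by simp
    then show ?thesis using tR by (simp add: algebra_simps)
  qed
  have tiff2: "fd y < t \<longleftrightarrow> c * (fd y * R') - \<beta> < 0" for y
  proof -
    have "fd y < t \<longleftrightarrow> fd y * (c * R') < t * (c * R')" using pos R'pos by simp
    then show ?thesis using tR by (simp add: algebra_simps)
  qed
  define H where "H = (\<lambda>q. c * f (rate g s2 q B - re) - \<beta> * q)"
  have Hder: "DERIV H p :> c * (fd s * R') - \<beta>" if "s > 0"
  proof -
    have d1: "DERIV (\<lambda>q. rate g s2 q B - re) p :> R'"
      using DERIV_diff[OF rderiv DERIV_const[of re]] by simp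
    have d2: "DERIV (\<lambda>q. f (rate g s2 q B - re)) p :> fd s * R'"
    proof -
      have "DERIV f (rate g s2 p B - re) :> fd s" using fder that unfolding s_def r_def by simp
      from DERIV_chain2[OF this d1] show ?thesis by simp
    qed
    show ?thesis unfolding H_def
      using DERIV_diff[OF DERIV_cmult[OF d2, of c] DERIV_cmult[OF DERIV_ident, of \<beta>]] by simp
  qed
  (* upward improvement impossible *)
  have UP: "fd s \<le> t" if "s > 0"
  proof (rule ccontr)
    assume "\<not> fd s \<le> t"
    then have "c * (fd s * R') - \<beta> > 0" using tiff[of s] by (simp add: not_le)
    from DERIV_pos_inc_right[OF Hder[OF that] this] obtain d where d: "d > 0"
      "\<And>h. h > 0 \<Longrightarrow> h < d \<Longrightarrow> H p < H (p + h)" by blast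
    define h where "h = d/2"
    have h: "h > 0" "h < d" unfolding h_def using d by auto
    have rh: "rate g s2 (p+h) B > r" unfolding r_def using rate_strict_mono[of g s2 B p "p+h"] pos h by simp
    have feas: "rate g s2 (p+h) B \<ge> rmin" "rate g s2 (p+h) B - re > 0"
      using rh rfeas that unfolding r_def s_def by auto
    have "c * uval f (rate g s2 (p+h) B - re) - \<beta>*(p+h) \<le> c * uval f (rate g s2 p B - re) - \<beta>*p"
      using opt[of "p+h"] feas pos h by simp
    moreover have "uval f (rate g s2 (p+h) B - re) = f (rate g s2 (p+h) B - re)"
      using feas unfolding uval_def by simp
    moreover have "uval f (rate g s2 p B - re) = f (rate g s2 p B - re)"
      using that unfolding uval_def s_def r_def by simp
    ultimately have "H (p+h) \<le> H p" unfolding H_def by simp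
    then show False using d(2)[OF h] by simp
  qed
  (* downward improvement impossible when constraint inactive *)
  have DOWN: "fd s \<ge> t" if "r > rmin"
  proof (rule ccontr)
    assume "\<not> fd s \<ge> t"
    have sp: "s > 0" using that pos unfolding s_def by simp
    have "c * (fd s * R') - \<beta> < 0" using tiff2[of s] \<open>\<not> fd s \<ge> t\<close> by (simp add: not_le)
    from DERIV_neg_dec_left[OF Hder[OF sp] this] obtain d1 where d1: "d1 > 0"
      "\<And>h. h > 0 \<Longrightarrow> h < d1 \<Longrightarrow> H p < H (p - h)" by blast
    have "\<forall>\<^sub>F q in at p. rate g s2 q B > rmin"
      using rcont that unfolding r_def isCont_def by (rule order_tendstoD(1))
    then obtain d2 where d2: "d2 > 0" "\<And>q. q \<noteq> p \<Longrightarrow> dist q p < d2 \<Longrightarrow> rate g s2 q B > rmin"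
      unfolding eventually_at by blast
    define h where "h = min d1 (min d2 p) / 2"
    have h: "h > 0" "h < d1" "h < d2" "h < p" unfolding h_def using d1 d2 ppos by auto
    have rh: "rate g s2 (p-h) B > rmin" using d2(2)[of "p-h"] h by (simp add: dist_real_def)
    have feas: "p - h \<ge> 0" "rate g s2 (p-h) B \<ge> rmin" "rate g s2 (p-h) B - re > 0"
      using rh h pos by auto
    have "c * uval f (rate g s2 (p-h) B - re) - \<beta>*(p-h) \<le> c * uval f (rate g s2 p B - re) - \<beta>*p"
      using opt[of "p-h"] feas by simp
    moreover have "uval f (rate g s2 (p-h) B - re) = f (rate g s2 (p-h) B - re)"
      using feas unfolding uval_def by simp
    moreover have "uval f (rate g s2 p B - re) = f (rate g s2 p B - re)"
      using sp unfolding uval_def s_def r_def by simp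
    ultimately have "H (p-h) \<le> H p" unfolding H_def by simp
    then show False using d1(2)[OF h(1,2)] by simp
  qed
  have ZERO: "fd h0 \<le> t" if "s = 0" "h0 > 0" for h0
  proof (rule ccontr)
    assume "\<not> fd h0 \<le> t"
    then have pos0: "c * (fd h0 * R') - \<beta> > 0" using tiff[of h0] by (simp add: not_le)
    have "rate g s2 p B = re" using that(1) unfolding s_def r_def by simp
    then obtain L where L: "(f \<longlongrightarrow> L) (at_right 0)" using adm by auto
    have uL: "uval f 0 = L" unfolding uval_def using L by (simp add: tendsto_Lim)
    have bound: "f h - L \<ge> fd h0 * h" if h: "0 < h" "h \<le> h0" for h
    proof -
      have "\<forall>\<^sub>F a in at_right 0. f h - f a \<ge> fd h0 * (h - a)"
        unfolding eventually_at_right_field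
      proof (intro exI[of _ h] conjI allI impI)
        show "0 < h" using h by simp
        fix a :: real assume a: "0 < a" "a < h"
        obtain z where z: "a < z" "z < h" "f h - f a = (h - a) * fd z"
          using MVT2[OF a(2), of f fd] fder a by force
        have "fd h0 \<le> fd z" using fd_antitone[OF fdd, of z h0] z a h by simp
        then show "f h - f a \<ge> fd h0 * (h - a)" using z a by (simp add: mult.commute mult_right_mono)
      qed
      moreover have "((\<lambda>a. f h - f a) \<longlongrightarrow> f h - L) (at_right 0)" by (intro tendsto_intros L)
      moreover have "((\<lambda>a. fd h0 * (h - a)) \<longlongrightarrow> fd h0 * (h - 0)) (at_right 0)"
        by (intro tendsto_intros)
      ultimately have "fd h0 * (h - 0) \<le> f h - L"
        by (intro tendsto_le[of "at_right (0::real)"]) auto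
      then show ?thesis by simp
    qed
    define \<phi> where "\<phi> = (\<lambda>\<delta>. c * fd h0 * (rate g s2 (p + \<delta>) B - r) - \<beta> * \<delta>)"
    have rd0: "DERIV (\<lambda>\<delta>. rate g s2 (p + \<delta>) B) 0 :> R'"
    proof -
      have "DERIV (\<lambda>\<delta>. p + \<delta>) 0 :> 1" by (auto intro!: derivative_eq_intros)
      from DERIV_chain2[of "\<lambda>q. rate g s2 q B", OF _ this] rderiv show ?thesis by simp
    qed
    have "DERIV \<phi> 0 :> c * fd h0 * (R' - 0) - \<beta> * 1" unfolding \<phi>_def
      by (intro DERIV_diff DERIV_cmult rd0 DERIV_const DERIV_ident)
    then have "DERIV \<phi> 0 :> c * (fd h0 * R') - \<beta>" by (simp add: algebra_simps)
    from DERIV_pos_inc_right[OF this pos0] obtain d1 where d1: "d1 > 0"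
      "\<And>h. h > 0 \<Longrightarrow> h < d1 \<Longrightarrow> \<phi> 0 < \<phi> (0 + h)" by blast
    have "\<forall>\<^sub>F q in at p. rate g s2 q B < r + h0"
      using rcont that unfolding r_def isCont_def using \<open>h0 > 0\<close> by (intro order_tendstoD(2)) auto
    then obtain d2 where d2: "d2 > 0" "\<And>q. q \<noteq> p \<Longrightarrow> dist q p < d2 \<Longrightarrow> rate g s2 q B < r + h0"
      unfolding eventually_at by blast
    define h where "h = min d1 d2 / 2"
    have h: "h > 0" "h < d1" "h < d2" unfolding h_def using d1 d2 by auto
    have rh: "rate g s2 (p+h) B < r + h0" using d2(2)[of "p+h"] h by (simp add: dist_real_def)
    have rh2: "rate g s2 (p+h) B > r" unfolding r_def using rate_strict_mono[of g s2 B p "p+h"] pos h by simp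
    have re_r: "re = r" using that unfolding s_def by simp
    have feas: "p + h \<ge> 0" "rate g s2 (p+h) B \<ge> rmin" "rate g s2 (p+h) B - re > 0"
      using rh2 h pos rfeas re_r unfolding r_def by auto
    define R where "R = rate g s2 (p+h) B - re"
    have A: "c * f R - \<beta>*(p+h) \<le> c * L - \<beta>*p"
    proof -
      have "c * uval f (rate g s2 (p+h) B - re) - \<beta>*(p+h) \<le> c * uval f (rate g s2 p B - re) - \<beta>*p"
        using opt[of "p+h"] feas by simp
      moreover have "uval f (rate g s2 (p+h) B - re) = f R"
        using feas unfolding uval_def R_def by simp
      moreover have "uval f (rate g s2 p B - re) = L"
        using uL re_r unfolding r_def by simp
      ultimately show ?thesis by simp
    qed
    have Bd: "f R - L \<ge> fd h0 * R"
      using bound[of R] feas rh re_r unfolding R_def by simp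
    have Cd: "c * (f R - L) \<ge> c * (fd h0 * R)" using mult_left_mono[OF Bd] pos by simp
    have "\<phi> h > 0" using d1(2)[OF h(1,2)] unfolding \<phi>_def r_def by simp
    then have "c * (fd h0 * R) - \<beta> * h > 0" unfolding \<phi>_def R_def using re_r by (simp add: mult.assoc)
    then show False using A Cd by (simp add: algebra_simps)
  qed
  have tt: "\<beta> * s2 * (1 + g * p / (s2 * B)) * ln 2 / (c * g) = t" unfolding t_def x_def by simp
  have rr: "rate g s2 p B = r" unfolding r_def by simp
  have rge: "r \<ge> rmin" using rfeas unfolding r_def .
  show ?thesis
  proof (cases "\<exists>\<xi>\<ge>0. deriv_eq fd \<xi> t")
    case False
    have nr: "\<not> r > rmin"
    proof
      assume "r > rmin"
      then have sp: "s > 0" using pos unfolding s_def by simp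
      have "fd s = t" using UP[OF sp] DOWN[OF \<open>r > rmin\<close>] by simp
      then have "deriv_eq fd s t" unfolding deriv_eq_def using sp by simp
      then show False using False sp by auto
    qed
    have "gamma_spec fd re \<beta> s2 c g (g*p/(s2*B)) re"
      by (rule gamma_specI2) (use False tt in auto)
    moreover have "max re rmin = rate g s2 p B" using nr rge pos rr by simp
    ultimately show ?thesis by blast
  next
    case True
    have "\<exists>\<xi>\<ge>0. deriv_eq fd \<xi> t \<and> re + \<xi> \<le> r \<and> (r > rmin \<longrightarrow> re + \<xi> = r)"
    proof (cases "r > rmin")
      case True
      then have sp: "s > 0" using pos unfolding s_def by simp
      have "fd s = t" using UP[OF sp] DOWN[OF True] by simp
      then have "deriv_eq fd s t" unfolding deriv_eq_def using sp by simp
      then show ?thesis using sp unfolding s_def by (intro exI[of _ s]) (auto simp: s_def)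
    next
      case nr: False
      show ?thesis
      proof (cases "s > 0")
        case sp: True
        show ?thesis
        proof (cases "fd s = t")
          case True
          then have "deriv_eq fd s t" unfolding deriv_eq_def using sp by simp
          then show ?thesis using sp nr by (intro exI[of _ s]) (auto simp: s_def)
        next
          case False
          then have lt: "fd s < t" using UP[OF sp] by simp
          obtain \<xi> where xi: "\<xi> \<ge> 0" "deriv_eq fd \<xi> t" using \<open>\<exists>\<xi>\<ge>0. deriv_eq fd \<xi> t\<close> by auto
          have "\<xi> \<le> s"
          proof (rule ccontr)
            assume "\<not> \<xi> \<le> s"
            then have "\<xi> > 0" "fd \<xi> = t" using xi sp unfolding deriv_eq_def by auto
            moreover have "fd \<xi> \<le> fd s" using fd_antitone[OF fdd sp] \<open>\<not> \<xi> \<le> s\<close> by simp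
            ultimately show False using lt by simp
          qed
          then show ?thesis using xi nr by (intro exI[of _ \<xi>]) (auto simp: s_def)
        qed
      next
        case False
        then have s00: "s = 0" using s0 by simp
        obtain \<xi> where xi: "\<xi> \<ge> 0" "deriv_eq fd \<xi> t" using \<open>\<exists>\<xi>\<ge>0. deriv_eq fd \<xi> t\<close> by auto
        have "deriv_eq fd 0 t"
        proof (cases "\<xi> = 0")
          case True then show ?thesis using xi by simp
        next
          case False
          then have xp: "\<xi> > 0" "fd \<xi> = t" using xi unfolding deriv_eq_def by auto
          have "\<forall>\<^sub>F y in at_right 0. fd y = t"
            unfolding eventually_at_right_field
          proof (intro exI[of _ \<xi>] conjI allI impI)
            show "0 < \<xi>" using xp by simp
            fix y :: real assume y: "0 < y" "y < \<xi>"
            have "fd \<xi> \<le> fd y" using fd_antitone[OF fdd y(1)] y by simp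
            moreover have "fd y \<le> t" using ZERO[OF s00 y(1)] .
            ultimately show "fd y = t" using xp by simp
          qed
          then have "(fd \<longlongrightarrow> t) (at_right 0)" by (rule tendsto_eventually)
          then show ?thesis unfolding deriv_eq_def by simp
        qed
        then show ?thesis using nr s00 by (intro exI[of _ 0]) (auto simp: s_def)
      qed
    qed
    then obtain \<xi> where xi: "\<xi> \<ge> 0" "deriv_eq fd \<xi> t" "re + \<xi> \<le> r" "r > rmin \<longrightarrow> re + \<xi> = r"
      by blast
    have "gamma_spec fd re \<beta> s2 c g (g*p/(s2*B)) (re + \<xi>)"
      by (rule gamma_specI1[OF xi(1)]) (use xi(2) tt in auto)
    moreover have "max (re + \<xi>) rmin = rate g s2 p B" using xi(3,4) rge rr by auto
    ultimately show ?thesis by blast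
  qed
qed



lemma sum_diff_on:
  fixes F G :: "nat \<Rightarrow> real"
  assumes "finite I" "S \<subseteq> I" "\<forall>k\<in>I - S. F k = G k"
  shows "sum F I - sum G I = (\<Sum>k\<in>S. F k - G k)"
proof -
  have "sum F I - sum G I = (\<Sum>k\<in>I. F k - G k)" by (simp add: sum_subtractf)
  also have "\<dots> = (\<Sum>k\<in>S. F k - G k)"
    using assms by (intro sum.mono_neutral_right) auto
  finally show ?thesis .
qed

theorem theorem2:
  fixes N :: nat and Btot :: real
    and g s2 pcir c re rmin \<beta> \<nu> p B :: "nat \<Rightarrow> real"
    and f fd :: "nat \<Rightarrow> real \<Rightarrow> real"
  assumes "N \<ge> 1" and "Btot > 0"
    and "\<forall>n\<in>{1..N}. g n > 0 \<and> s2 n > 0 \<and> pcir n > 0 \<and> c n > 0 \<and> re n \<ge> 0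
                     \<and> rmin n > 0 \<and> rmin n \<ge> re n"
    and "\<forall>n\<in>{1..N}. \<forall>x>0. (f n has_real_derivative fd n x) (at x) \<and> fd n x > 0"
    and "\<forall>n\<in>{1..N}. \<forall>x>0. \<exists>d. (fd n has_real_derivative d) (at x) \<and> d \<le> 0"
    and "\<forall>n\<in>{1..N}. \<beta> n > 0 \<and> \<nu> n > 0"
    and "P3_global_opt N Btot g s2 pcir c re rmin f \<beta> \<nu> p B"
  shows "\<exists>lam>0. \<exists>gam :: nat \<Rightarrow> real.
           (\<forall>n\<in>{1..N}. gamma_spec (fd n) (re n) (\<beta> n) (s2 n) (c n) (g n)
                          (psi (g n) (s2 n) (\<beta> n) (\<nu> n) lam) (gam n)) \<and>
           (\<Sum>n\<in>{1..N}. Bcal (gam n) (rmin n) (psi (g n) (s2 n) (\<beta> n) (\<nu> n) lam)) = Btot \<and>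
           (\<forall>n\<in>{1..N}.
              B n = Bcal (gam n) (rmin n) (psi (g n) (s2 n) (\<beta> n) (\<nu> n) lam) \<and>
              p n = s2 n * B n * psi (g n) (s2 n) (\<beta> n) (\<nu> n) lam / g n)"
proof -
  define I where "I = {1..N}"
  have finI: "finite I" unfolding I_def by simp
  have par: "\<And>n. n \<in> I \<Longrightarrow> g n > 0 \<and> s2 n > 0 \<and> pcir n > 0 \<and> c n > 0 \<and> re n \<ge> 0
                     \<and> rmin n > 0 \<and> rmin n \<ge> re n \<and> \<beta> n > 0 \<and> \<nu> n > 0"
    using assms(3,6) unfolding I_def by auto
  have adm: "P3_admissible N Btot g s2 re rmin f p B"
    and opt: "\<And>p' B'. P3_admissible N Btot g s2 re rmin f p' B' \<Longrightarrow>
        P3_obj N g s2 pcir c re f \<beta> \<nu> p' B' \<le> P3_obj N g s2 pcir c re f \<beta> \<nu> p B"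
    using assms(7) unfolding P3_global_opt_def by auto
  have feasn: "\<And>n. n \<in> I \<Longrightarrow> p n \<ge> 0 \<and> B n > 0 \<and> rate (g n) (s2 n) (p n) (B n) \<ge> rmin n"
    and sumB: "(\<Sum>n\<in>I. B n) \<le> Btot"
    and admn: "\<And>n. n \<in> I \<Longrightarrow> rate (g n) (s2 n) (p n) (B n) - re n > 0 \<or> (\<exists>L. (f n \<longlongrightarrow> L) (at_right 0))"
    using adm unfolding P3_admissible_def P3_feasible_def I_def by auto
  define T where "T = (\<lambda>k (p::nat\<Rightarrow>real) (B::nat\<Rightarrow>real). \<nu> k * (c k * uval (f k) (rate (g k) (s2 k) (p k) (B k) - re k)
                          - \<beta> k * (p k + pcir k)))"
  have objT: "P3_obj N g s2 pcir c re f \<beta> \<nu> p B = (\<Sum>k\<in>I. T k p B)" for p B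
    unfolding P3_obj_def T_def I_def by simp
  have key: "(\<Sum>k\<in>S. T k p' B' - T k p B) \<le> 0"
    if S: "S \<subseteq> I" "\<forall>k\<in>I - S. p' k = p k \<and> B' k = B k"
      and new: "\<forall>k\<in>S. p' k \<ge> 0 \<and> B' k > 0 \<and> rate (g k) (s2 k) (p' k) (B' k) \<ge> rmin k \<and>
               (rate (g k) (s2 k) (p' k) (B' k) - re k > 0 \<or> (\<exists>L. (f k \<longlongrightarrow> L) (at_right 0)))"
      and sB: "(\<Sum>k\<in>I. B' k) \<le> Btot"
    for S p' B'
  proof -
    have "P3_admissible N Btot g s2 re rmin f p' B'"
    proof -
      have a: "\<forall>n\<in>{1..N}. 0 \<le> p' n \<and> 0 < B' n \<and> rmin n \<le> rate (g n) (s2 n) (p' n) (B' n)"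
      proof
        fix n assume nI: "n \<in> {1..N}"
        show "0 \<le> p' n \<and> 0 < B' n \<and> rmin n \<le> rate (g n) (s2 n) (p' n) (B' n)"
          using new S feasn[of n] nI unfolding I_def by (cases "n \<in> S") auto
      qed
      have b: "\<forall>n\<in>{1..N}. rate (g n) (s2 n) (p' n) (B' n) - re n > 0 \<or> (\<exists>L. (f n \<longlongrightarrow> L) (at_right 0))"
      proof
        fix n assume nI: "n \<in> {1..N}"
        show "rate (g n) (s2 n) (p' n) (B' n) - re n > 0 \<or> (\<exists>L. (f n \<longlongrightarrow> L) (at_right 0))"
          using new S admn[of n] nI unfolding I_def by (cases "n \<in> S") auto
      qed
      show ?thesis using a b sB unfolding I_def P3_admissible_def P3_feasible_def by simp
    qed
    from opt[OF this] have "(\<Sum>k\<in>I. T k p' B') - (\<Sum>k\<in>I. T k p B) \<le> 0" unfolding objT by simp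
    also have "(\<Sum>k\<in>I. T k p' B') - (\<Sum>k\<in>I. T k p B) = (\<Sum>k\<in>S. T k p' B' - T k p B)"
      by (rule sum_diff_on[OF finI S(1)]) (use S(2) in \<open>auto simp: T_def\<close>)
    finally show ?thesis .
  qed
  define r where "r = (\<lambda>k. rate (g k) (s2 k) (p k) (B k))"
  define x where "x = (\<lambda>k. g k * p k / (s2 k * B k))"
  define lf where "lf = (\<lambda>k. \<nu> k * \<beta> k * s2 k * ((1 + x k) * ln (1 + x k) - x k) / g k)"
  have ppos: "p k > 0" if "k \<in> I" for k
  proof (rule ccontr)
    assume "\<not> p k > 0" then have "p k = 0" using feasn[OF that] by simp
    then show False using feasn[OF that] par[OF that] rate_zero[of "g k" "s2 k" "B k"] by simp
  qed
  have xpos: "x k > 0" if "k \<in> I" for k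
    unfolding x_def using ppos[OF that] par[OF that] feasn[OF that] by simp
  have lfpos: "lf k > 0" if "k \<in> I" for k
    unfolding lf_def using Kpos[OF xpos[OF that]] par[OF that] by simp
  have r0: "r k \<ge> 0" if "k \<in> I" for k
    unfolding r_def using rate_nonneg[of "g k" "s2 k" "B k" "p k"] par[OF that] feasn[OF that] by simp
  have Pwp: "Pw (g k) (s2 k) (r k) (B k) = p k" if "k \<in> I" for k
    using Pw_at_opt(1)[of "g k" "s2 k" "B k" "p k" "r k"] par[OF that] feasn[OF that] unfolding r_def by simp
  have PwD: "DERIV (Pw (g k) (s2 k) (r k)) (B k) :> s2 k / g k * (x k - (1 + x k) * ln (1 + x k))"
    if "k \<in> I" for k
    using Pw_at_opt(2)[of "g k" "s2 k" "B k" "p k" "r k"] par[OF that] feasn[OF that]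
    unfolding r_def x_def by simp
  have lfD: "\<nu> k * \<beta> k * (s2 k / g k * (x k - (1 + x k) * ln (1 + x k))) = - lf k" if "k \<in> I" for k
    unfolding lf_def using par[OF that] by (simp add: field_simps)
  have Tdiff: "T k p' B' - T k p B = - (\<nu> k * \<beta> k * (p' k - p k))"
    if "rate (g k) (s2 k) (p' k) (B' k) = r k" for k p' B'
    using that unfolding T_def r_def by (simp add: algebra_simps)
  have rPw: "rate (g k) (s2 k) (Pw (g k) (s2 k) (r k) b) b = r k" if "k \<in> I" "b > 0" for k b
    using rate_Pw[of "g k" "s2 k" b "r k"] par[OF that(1)] that(2) by simp
  have PwD2: "DERIV (\<lambda>\<delta>. Pw (g k) (s2 k) (r k) (B k + \<epsilon> * \<delta>)) 0 :> s2 k / g k * (x k - (1 + x k) * ln (1 + x k)) * \<epsilon>"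
    if "k \<in> I" for k \<epsilon>
  proof -
    have h1: "DERIV (\<lambda>\<delta>. B k + \<epsilon> * \<delta>) 0 :> \<epsilon>" by (auto intro!: derivative_eq_intros)
    have "DERIV (Pw (g k) (s2 k) (r k)) (B k + \<epsilon> * 0) :> s2 k / g k * (x k - (1 + x k) * ln (1 + x k))"
      using PwD[OF that] by simp
    from DERIV_chain2[OF this h1] show ?thesis .
  qed
  have one: "1 \<in> I" unfolding I_def using assms(1) by simp
  have fullB: "(\<Sum>k\<in>I. B k) = Btot"
  proof (rule ccontr)
    assume "(\<Sum>k\<in>I. B k) \<noteq> Btot"
    then have lt: "(\<Sum>k\<in>I. B k) < Btot" using sumB by simp
    define G where "G = (\<lambda>\<delta>. \<nu> 1 * \<beta> 1 * Pw (g 1) (s2 1) (r 1) (B 1 + 1 * \<delta>))"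
    have "DERIV G 0 :> \<nu> 1 * \<beta> 1 * (s2 1 / g 1 * (x 1 - (1 + x 1) * ln (1 + x 1)) * 1)"
      unfolding G_def by (intro DERIV_cmult PwD2 one)
    then have GD: "DERIV G 0 :> - lf 1" using lfD[OF one] by simp
    define d where "d = min (B 1) (Btot - (\<Sum>k\<in>I. B k))"
    have d: "d > 0" unfolding d_def using feasn[OF one] lt by simp
    have "\<forall>y. \<bar>0 - y\<bar> < d \<longrightarrow> G 0 \<le> G y"
    proof (intro allI impI)
      fix y :: real assume y: "\<bar>0 - y\<bar> < d"
      define p' where "p' = p(1 := Pw (g 1) (s2 1) (r 1) (B 1 + y))"
      define B' where "B' = B(1 := B 1 + y)"
      have B'1: "B' 1 > 0" unfolding B'_def d_def using y d_def by auto
      have rr: "rate (g 1) (s2 1) (p' 1) (B' 1) = r 1"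
        unfolding p'_def B'_def using rPw[OF one, of "B 1 + y"] B'1 unfolding B'_def by simp
      have sB': "(\<Sum>k\<in>I. B' k) - (\<Sum>k\<in>I. B k) = (\<Sum>k\<in>{1}. B' k - B k)"
        by (rule sum_diff_on[OF finI]) (use one in \<open>auto simp: B'_def\<close>)
      then have sB: "(\<Sum>k\<in>I. B' k) \<le> Btot" using y unfolding B'_def d_def by auto
      have n1: "p' 1 \<ge> 0" unfolding p'_def
        using Pw_nonneg[of "g 1" "s2 1" "B 1 + y" "r 1"] par[OF one] r0[OF one] B'1 unfolding B'_def by simp
      have n2: "rate (g 1) (s2 1) (p' 1) (B' 1) \<ge> rmin 1" using rr feasn[OF one] unfolding r_def by simp
      have n3: "rate (g 1) (s2 1) (p' 1) (B' 1) - re 1 > 0 \<or> (\<exists>L. (f 1 \<longlongrightarrow> L) (at_right 0))"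
        using rr admn[OF one] unfolding r_def by simp
      have new: "\<forall>k\<in>{1}. p' k \<ge> 0 \<and> B' k > 0 \<and> rate (g k) (s2 k) (p' k) (B' k) \<ge> rmin k \<and>
               (rate (g k) (s2 k) (p' k) (B' k) - re k > 0 \<or> (\<exists>L. (f k \<longlongrightarrow> L) (at_right 0)))"
      proof
        fix k :: nat assume "k \<in> {1}"
        then have k: "k = 1" by simp
        show "p' k \<ge> 0 \<and> B' k > 0 \<and> rate (g k) (s2 k) (p' k) (B' k) \<ge> rmin k \<and>
               (rate (g k) (s2 k) (p' k) (B' k) - re k > 0 \<or> (\<exists>L. (f k \<longlongrightarrow> L) (at_right 0)))"
          unfolding k by (intro conjI n1 B'1 n2 n3)
      qed
      have S1: "{1} \<subseteq> I" using one by simp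
      have S2: "\<forall>k\<in>I - {1}. p' k = p k \<and> B' k = B k" unfolding p'_def B'_def by simp
      have "(\<Sum>k\<in>{1}. T k p' B' - T k p B) \<le> 0" using key[OF S1 S2 new sB] .
      then have "- (\<nu> 1 * \<beta> 1 * (p' 1 - p 1)) \<le> 0" using Tdiff[of 1 p' B', OF rr] by simp
      then show "G 0 \<le> G y" unfolding G_def p'_def using Pwp[OF one] par[OF one]
        by (simp add: algebra_simps)
    qed
    from DERIV_local_min[OF GD d this] show False using lfpos[OF one] by simp
  qed
  (* equal multipliers *)
  have swap: "lf n = lf m" if nI: "n \<in> I" and mI: "m \<in> I" and nm: "n \<noteq> m" for n m
  proof -
    define G where "G = (\<lambda>\<delta>. \<nu> n * \<beta> n * Pw (g n) (s2 n) (r n) (B n + 1 * \<delta>)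
                           + \<nu> m * \<beta> m * Pw (g m) (s2 m) (r m) (B m + (-1) * \<delta>))"
    have "DERIV G 0 :> \<nu> n * \<beta> n * (s2 n / g n * (x n - (1 + x n) * ln (1 + x n)) * 1)
                     + \<nu> m * \<beta> m * (s2 m / g m * (x m - (1 + x m) * ln (1 + x m)) * (-1))"
      unfolding G_def by (intro DERIV_add DERIV_cmult PwD2 nI mI)
    then have GD: "DERIV G 0 :> lf m - lf n" using lfD[OF nI] lfD[OF mI] by simp
    define d where "d = min (B n) (B m)"
    have d: "d > 0" unfolding d_def using feasn[OF nI] feasn[OF mI] by simp
    have "\<forall>y. \<bar>0 - y\<bar> < d \<longrightarrow> G 0 \<le> G y"
    proof (intro allI impI)
      fix y :: real assume y: "\<bar>0 - y\<bar> < d"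
      define p' where "p' = p(n := Pw (g n) (s2 n) (r n) (B n + y), m := Pw (g m) (s2 m) (r m) (B m - y))"
      define B' where "B' = B(n := B n + y, m := B m - y)"
      have Bn: "B n + y > 0" "B m - y > 0" using y unfolding d_def by auto
      have rrn: "rate (g n) (s2 n) (p' n) (B' n) = r n"
        unfolding p'_def B'_def using rPw[OF nI Bn(1)] nm by simp
      have rrm: "rate (g m) (s2 m) (p' m) (B' m) = r m"
        unfolding p'_def B'_def using rPw[OF mI Bn(2)] nm by simp
      have "(\<Sum>k\<in>I. B' k) - (\<Sum>k\<in>I. B k) = (\<Sum>k\<in>{n,m}. B' k - B k)"
        by (rule sum_diff_on[OF finI]) (use nI mI in \<open>auto simp: B'_def\<close>)
      also have "\<dots> = 0" using nm unfolding B'_def by simp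
      finally have sB: "(\<Sum>k\<in>I. B' k) \<le> Btot" using sumB by simp
      have pn': "p' n = Pw (g n) (s2 n) (r n) (B n + y)" "p' m = Pw (g m) (s2 m) (r m) (B m - y)"
        "B' n = B n + y" "B' m = B m - y" unfolding p'_def B'_def using nm by auto
      have nn: "p' n \<ge> 0 \<and> B' n > 0 \<and> rate (g n) (s2 n) (p' n) (B' n) \<ge> rmin n \<and>
               (rate (g n) (s2 n) (p' n) (B' n) - re n > 0 \<or> (\<exists>L. (f n \<longlongrightarrow> L) (at_right 0)))"
      proof (intro conjI)
        show "p' n \<ge> 0" unfolding pn'
          using Pw_nonneg[of "g n" "s2 n" "B n + y" "r n"] par[OF nI] r0[OF nI] Bn by simp
        show "B' n > 0" unfolding pn' using Bn by simp
        show "rate (g n) (s2 n) (p' n) (B' n) \<ge> rmin n" using rrn feasn[OF nI] unfolding r_def by simp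
        show "rate (g n) (s2 n) (p' n) (B' n) - re n > 0 \<or> (\<exists>L. (f n \<longlongrightarrow> L) (at_right 0))"
          using rrn admn[OF nI] unfolding r_def by simp
      qed
      have mm: "p' m \<ge> 0 \<and> B' m > 0 \<and> rate (g m) (s2 m) (p' m) (B' m) \<ge> rmin m \<and>
               (rate (g m) (s2 m) (p' m) (B' m) - re m > 0 \<or> (\<exists>L. (f m \<longlongrightarrow> L) (at_right 0)))"
      proof (intro conjI)
        show "p' m \<ge> 0" unfolding pn'
          using Pw_nonneg[of "g m" "s2 m" "B m - y" "r m"] par[OF mI] r0[OF mI] Bn by simp
        show "B' m > 0" unfolding pn' using Bn by simp
        show "rate (g m) (s2 m) (p' m) (B' m) \<ge> rmin m" using rrm feasn[OF mI] unfolding r_def by simp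
        show "rate (g m) (s2 m) (p' m) (B' m) - re m > 0 \<or> (\<exists>L. (f m \<longlongrightarrow> L) (at_right 0))"
          using rrm admn[OF mI] unfolding r_def by simp
      qed
      have new: "\<forall>k\<in>{n,m}. p' k \<ge> 0 \<and> B' k > 0 \<and> rate (g k) (s2 k) (p' k) (B' k) \<ge> rmin k \<and>
               (rate (g k) (s2 k) (p' k) (B' k) - re k > 0 \<or> (\<exists>L. (f k \<longlongrightarrow> L) (at_right 0)))"
      proof
        fix k :: nat assume "k \<in> {n,m}"
        then have k: "k = n \<or> k = m" by simp
        then show "p' k \<ge> 0 \<and> B' k > 0 \<and> rate (g k) (s2 k) (p' k) (B' k) \<ge> rmin k \<and>
               (rate (g k) (s2 k) (p' k) (B' k) - re k > 0 \<or> (\<exists>L. (f k \<longlongrightarrow> L) (at_right 0)))"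
        proof
          assume "k = n" then show ?thesis using nn by simp
        next
          assume "k = m" then show ?thesis using mm by simp
        qed
      qed
      have S1: "{n,m} \<subseteq> I" using nI mI by simp
      have S2: "\<forall>k\<in>I - {n,m}. p' k = p k \<and> B' k = B k" unfolding p'_def B'_def by simp
      have "(\<Sum>k\<in>{n,m}. T k p' B' - T k p B) \<le> 0" using key[OF S1 S2 new sB] .
      then have "- (\<nu> n * \<beta> n * (p' n - p n)) - (\<nu> m * \<beta> m * (p' m - p m)) \<le> 0"
        using Tdiff[of n p' B', OF rrn] Tdiff[of m p' B', OF rrm] nm by simp
      then show "G 0 \<le> G y" unfolding G_def p'_def using Pwp[OF nI] Pwp[OF mI] nm
        by (simp add: algebra_simps)
    qed
    from DERIV_local_min[OF GD d this] show ?thesis by simp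
  qed
  define lam where "lam = lf 1"
  have lamn: "lf n = lam" if "n \<in> I" for n
    unfolding lam_def using swap[OF that one] by (cases "n = 1") auto
  have lampos: "lam > 0" unfolding lam_def using lfpos[OF one] .
  have psin: "psi (g n) (s2 n) (\<beta> n) (\<nu> n) lam = x n" if "n \<in> I" for n
    using psi_eq[of "x n" "g n" "s2 n" "\<beta> n" "\<nu> n" lam] xpos[OF that] par[OF that] lamn[OF that]
    unfolding lf_def by simp
  have ug: "\<exists>gam. gamma_spec (fd n) (re n) (\<beta> n) (s2 n) (c n) (g n) (x n) gam \<and> max gam (rmin n) = r n"
    if nI: "n \<in> I" for n
  proof -
    have opt1: "c n * uval (f n) (rate (g n) (s2 n) q (B n) - re n) - \<beta> n * q
        \<le> c n * uval (f n) (rate (g n) (s2 n) (p n) (B n) - re n) - \<beta> n * p n"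
      if q: "q \<ge> 0" "rate (g n) (s2 n) q (B n) \<ge> rmin n"
        "rate (g n) (s2 n) q (B n) - re n > 0 \<or> (\<exists>L. (f n \<longlongrightarrow> L) (at_right 0))" for q
    proof -
      have "(\<Sum>k\<in>{n}. T k (p(n := q)) B - T k p B) \<le> 0"
        by (rule key) (use nI q feasn[OF nI] sumB in auto)
      then have "\<nu> n * (c n * uval (f n) (rate (g n) (s2 n) q (B n) - re n) - \<beta> n * (q + pcir n))
          \<le> \<nu> n * (c n * uval (f n) (rate (g n) (s2 n) (p n) (B n) - re n) - \<beta> n * (p n + pcir n))"
        unfolding T_def by simp
      then have "c n * uval (f n) (rate (g n) (s2 n) q (B n) - re n) - \<beta> n * (q + pcir n)
          \<le> c n * uval (f n) (rate (g n) (s2 n) (p n) (B n) - re n) - \<beta> n * (p n + pcir n)"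
        using par[OF nI] by (simp add: mult_le_cancel_left_pos)
      then show ?thesis by (simp add: algebra_simps)
    qed
    have fdern: "\<forall>y>0. (f n has_real_derivative fd n y) (at y) \<and> fd n y > 0"
      using assms(4) nI unfolding I_def by auto
    have fddn: "\<forall>y>0. \<exists>d. (fd n has_real_derivative d) (at y) \<and> d \<le> 0"
      using assms(5) nI unfolding I_def by auto
    show ?thesis
      using user_gamma[of "g n" "s2 n" "c n" "\<beta> n" "re n" "rmin n" "B n" "p n" "f n" "fd n", OF _ _ _ _ _ _ _ _ _ _ fdern fddn admn[OF nI] opt1]
        par[OF nI] feasn[OF nI] unfolding x_def r_def by auto
  qed
  have "\<forall>n\<in>I. \<exists>gam. gamma_spec (fd n) (re n) (\<beta> n) (s2 n) (c n) (g n) (x n) gam \<and> max gam (rmin n) = r n"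
    by (intro ballI ug)
  then have "\<exists>gf. \<forall>n\<in>I. gamma_spec (fd n) (re n) (\<beta> n) (s2 n) (c n) (g n) (x n) (gf n) \<and> max (gf n) (rmin n) = r n"
    by (rule bchoice)
  then obtain gam where gam: "\<forall>n\<in>I. gamma_spec (fd n) (re n) (\<beta> n) (s2 n) (c n) (g n) (x n) (gam n) \<and> max (gam n) (rmin n) = r n"
    by (elim exE) simp
  have Bn: "B n = Bcal (gam n) (rmin n) (psi (g n) (s2 n) (\<beta> n) (\<nu> n) lam)" if nI: "n \<in> I" for n
  proof -
    have lg: "log 2 (1 + x n) > 0" using xpos[OF nI] by simp
    have "r n = B n * log 2 (1 + x n)" unfolding r_def x_def rate_def by simp
    then show ?thesis unfolding Bcal_def psin[OF nI] using gam nI lg by simp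
  qed
  have pn: "p n = s2 n * B n * psi (g n) (s2 n) (\<beta> n) (\<nu> n) lam / g n" if nI: "n \<in> I" for n
    unfolding psin[OF nI] x_def using par[OF nI] feasn[OF nI] by simp
  show ?thesis
  proof (intro exI[of _ lam] conjI lampos exI[of _ gam] ballI)
    fix n assume "n \<in> {1..N}"
    then have nI: "n \<in> I" unfolding I_def .
    show "gamma_spec (fd n) (re n) (\<beta> n) (s2 n) (c n) (g n) (psi (g n) (s2 n) (\<beta> n) (\<nu> n) lam) (gam n)"
      using gam nI psin[OF nI] by simp
    show "B n = Bcal (gam n) (rmin n) (psi (g n) (s2 n) (\<beta> n) (\<nu> n) lam)" using Bn[OF nI] .
    show "p n = s2 n * B n * psi (g n) (s2 n) (\<beta> n) (\<nu> n) lam / g n" using pn[OF nI] .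
  next
    have "(\<Sum>n\<in>{1..N}. Bcal (gam n) (rmin n) (psi (g n) (s2 n) (\<beta> n) (\<nu> n) lam)) = (\<Sum>n\<in>I. B n)"
      unfolding I_def by (rule sum.cong) (use Bn in \<open>auto simp: I_def\<close>)
    then show "(\<Sum>n\<in>{1..N}. Bcal (gam n) (rmin n) (psi (g n) (s2 n) (\<beta> n) (\<nu> n) lam)) = Btot"
      using fullB by simp
  qed
qed

end
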